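(* Let $H \in \mathbb{Z}^{k \times n}$, $b^\star \in \mathbb{R}^k$ and $b \in \mathbb{Z}^k$, and suppose there exists $x^\star \in [0,1]^n$ with $Hx^\star = b^\star$ such that $x^\star$ has at most $\varphi$ fractional entries (entries not in $\{0,1\}$), where $\varphi$ is a nonnegative integer. If the system $Hz = b$, $z \in \{0,1\}^n$ has a solution, then there exists a solution $\hat{z} \in \{0,1\}^n$ of $H\hat z = b$ with \[ \|x^\star - \hat{z}\|_1 \leq \left( \left\lceil \frac{\|b^\star - b\|_\infty}{\|H\|_\infty} \right\rceil + \varphi + 1 \right) (2k \|H\|_\infty + 1)^k. \]
   Context: For a matrix $H$, $\|H\|_\infty$ denotes the maximum absolute value of an entry of $H$; for vectors, $\|\cdot\|_1$ and $\|\cdot\|_\infty$ are the usual $\ell_1$- and $\ell_\infty$-norms. *)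

theory Defs
  imports Complex_Main
begin

text \<open>Matrices are k x n, represented as functions on indices i < k, j < n.
Vectors of length m are functions on indices < m.\<close>

definition mat_max_norm :: "nat \<Rightarrow> nat \<Rightarrow> (nat \<Rightarrow> nat \<Rightarrow> int) \<Rightarrow> int" where
  "mat_max_norm k n H = Max (insert 0 {\<bar>H i j\<bar> | i j. i < k \<and> j < n})"

definition vec_inf_norm :: "nat \<Rightarrow> (nat \<Rightarrow> real) \<Rightarrow> real" where
  "vec_inf_norm m v = Max (insert 0 {\<bar>v i\<bar> | i. i < m})"

definition vec_one_norm :: "nat \<Rightarrow> (nat \<Rightarrow> real) \<Rightarrow> real" where
  "vec_one_norm m v = (\<Sum>i<m. \<bar>v i\<bar>)"

definition mat_vec_real :: "nat \<Rightarrow> (nat \<Rightarrow> nat \<Rightarrow> int) \<Rightarrow> (nat \<Rightarrow> real) \<Rightarrow> nat \<Rightarrow> real" where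
  "mat_vec_real n H x i = (\<Sum>j<n. of_int (H i j) * x j)"

definition mat_vec_int :: "nat \<Rightarrow> (nat \<Rightarrow> nat \<Rightarrow> int) \<Rightarrow> (nat \<Rightarrow> int) \<Rightarrow> nat \<Rightarrow> int" where
  "mat_vec_int n H z i = (\<Sum>j<n. H i j * z j)"

end

theory Submission
  imports Defs
begin


lemma kernel_lemma:
  fixes a :: "nat \<Rightarrow> nat \<Rightarrow> real"
  assumes "finite F" "r < card F"
  shows "\<exists>\<mu>. (\<exists>i\<in>F. \<mu> i \<noteq> 0) \<and> (\<forall>l<r. (\<Sum>i\<in>F. a l i * \<mu> i) = 0)"
  using assms
proof (induction r arbitrary: F a)
  case 0
  then obtain i where "i \<in> F" by (metis card.empty equals0I less_irrefl)
  then show ?case by (rule_tac x="\<lambda>_. 1" in exI) auto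
next
  case (Suc r)
  show ?case
  proof (cases "\<forall>i\<in>F. a r i = 0")
    case True
    from Suc.IH[of F a] Suc.prems obtain \<mu> where
      m: "\<exists>i\<in>F. \<mu> i \<noteq> 0" "\<forall>l<r. (\<Sum>i\<in>F. a l i * \<mu> i) = 0" by auto
    have "\<forall>l<Suc r. (\<Sum>i\<in>F. a l i * \<mu> i) = 0"
      using m(2) True by (auto simp: less_Suc_eq)
    then show ?thesis using m(1) by blast
  next
    case False
    then obtain p where p: "p \<in> F" "a r p \<noteq> 0" by auto
    define F' where "F' = F - {p}"
    have fF': "finite F'" using Suc.prems F'_def by auto
    have cF': "r < card F'" using Suc.prems p F'_def by auto
    define b where "b l i = a l i - a l p * a r i / a r p" for l i
    from Suc.IH[OF fF' cF', of b] obtain \<mu>' where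
      m: "\<exists>i\<in>F'. \<mu>' i \<noteq> 0" "\<forall>l<r. (\<Sum>i\<in>F'. b l i * \<mu>' i) = 0" by auto
    define S where "S = (\<Sum>i\<in>F'. a r i * \<mu>' i)"
    define \<mu> where "\<mu> i = (if i = p then - S / a r p else \<mu>' i)" for i
    have Fe: "F = insert p F'" using p F'_def by auto
    have pn: "p \<notin> F'" using F'_def by auto
    have sumF: "(\<Sum>i\<in>F. a l i * \<mu> i) = a l p * (- S / a r p) + (\<Sum>i\<in>F'. a l i * \<mu>' i)" for l
    proof -
      have "(\<Sum>i\<in>F. a l i * \<mu> i) = a l p * \<mu> p + (\<Sum>i\<in>F'. a l i * \<mu> i)"
        using Fe pn fF' by simp
      also have "(\<Sum>i\<in>F'. a l i * \<mu> i) = (\<Sum>i\<in>F'. a l i * \<mu>' i)"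
        using pn by (intro sum.cong) (auto simp: \<mu>_def)
      finally show ?thesis by (simp add: \<mu>_def)
    qed
    have "\<forall>l<Suc r. (\<Sum>i\<in>F. a l i * \<mu> i) = 0"
    proof (intro allI impI)
      fix l assume l: "l < Suc r"
      show "(\<Sum>i\<in>F. a l i * \<mu> i) = 0"
      proof (cases "l = r")
        case True
        then show ?thesis using sumF[of l] p(2) by (simp add: S_def)
      next
        case False
        then have lr: "l < r" using l by auto
        have "(\<Sum>i\<in>F'. a l i * \<mu>' i) = (\<Sum>i\<in>F'. b l i * \<mu>' i + (a l p / a r p) * (a r i * \<mu>' i))"
          by (intro sum.cong) (auto simp: b_def algebra_simps)
        also have "\<dots> = (a l p / a r p) * S"
          using m(2) lr by (simp add: sum.distrib sum_distrib_left S_def)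
        finally show ?thesis using sumF[of l] by simp
      qed
    qed
    moreover have "\<exists>i\<in>F. \<mu> i \<noteq> 0" using m(1) Fe pn by (auto simp: \<mu>_def)
    ultimately show ?thesis by blast
  qed
qed



lemma step_lemma:
  fixes v :: "nat \<Rightarrow> nat \<Rightarrow> real" and lam :: "nat \<Rightarrow> real"
  assumes fA: "finite A" and cA: "card A = j" and kj: "k < j"
    and lb: "\<forall>i\<in>A. 0 \<le> lam i \<and> lam i \<le> 1"
    and lv: "\<forall>c<k. (\<Sum>i\<in>A. lam i * v i c) = 0"
    and ls: "(\<Sum>i\<in>A. lam i) = real j - real k"
  shows "\<exists>a\<in>A. \<exists>mu. (\<forall>i\<in>A. 0 \<le> mu i \<and> mu i \<le> 1) \<and> (\<forall>c<k. (\<Sum>i\<in>A. mu i * v i c) = 0)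
     \<and> (\<Sum>i\<in>A. mu i) = real j - real k - 1 \<and> mu a = 0"
proof -
  define P where "P mu \<longleftrightarrow> (\<forall>i\<in>A. 0 \<le> mu i \<and> mu i \<le> 1) \<and> (\<forall>c<k. (\<Sum>i\<in>A. mu i * v i c) = 0)
     \<and> (\<Sum>i\<in>A. mu i) = real j - real k - 1" for mu :: "nat \<Rightarrow> real"
  define g where "g mu = card {i\<in>A. mu i \<in> {0,1}}" for mu :: "nat \<Rightarrow> real"
  define cc where "cc = (real j - real k - 1) / (real j - real k)"
  have cc01: "0 \<le> cc" "cc \<le> 1" using kj by (auto simp: cc_def field_simps)
  have "P (\<lambda>i. cc * lam i)"
    unfolding P_def
  proof (intro conjI ballI allI impI)
    fix i assume "i \<in> A"
    then show "0 \<le> cc * lam i" "cc * lam i \<le> 1" using lb cc01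
      by (auto intro: mult_nonneg_nonneg mult_le_one)
  next
    fix c assume "c < k"
    then show "(\<Sum>i\<in>A. cc * lam i * v i c) = 0" using lv
      by (simp add: mult.assoc sum_distrib_left[symmetric])
  next
    have "(\<Sum>i\<in>A. cc * lam i) = cc * (\<Sum>i\<in>A. lam i)" by (simp add: sum_distrib_left)
    then show "(\<Sum>i\<in>A. cc * lam i) = real j - real k - 1"
      using ls kj by (simp add: cc_def)
  qed
  moreover have "\<forall>y. P y \<longrightarrow> g y < Suc j" using cA fA
    by (auto simp: g_def intro!: le_imp_less_Suc card_mono)
  ultimately obtain mu where Pmu: "P mu" and mx: "\<forall>y. P y \<longrightarrow> g y \<le> g mu"
    using ex_has_greatest_nat[of P _ g "Suc j"] by blast
  define F where "F = {i\<in>A. mu i \<notin> {0,1}}"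
  have fF: "finite F" using fA F_def by auto
  have FA: "F \<subseteq> A" using F_def by auto
  have mub: "\<forall>i\<in>A. 0 \<le> mu i \<and> mu i \<le> 1" using Pmu P_def by auto
  have cardF: "card F \<le> Suc k"
  proof (rule ccontr)
    assume "\<not> card F \<le> Suc k"
    then have "Suc k < card F" by simp
    from kernel_lemma[OF fF this, of "\<lambda>l i. if l < k then v i l else 1"]
    obtain \<nu> where nz: "\<exists>i\<in>F. \<nu> i \<noteq> 0"
      and eqs: "\<forall>l<Suc k. (\<Sum>i\<in>F. (if l < k then v i l else 1) * \<nu> i) = 0" by blast
    have eqv: "(\<Sum>i\<in>F. \<nu> i * v i c) = 0" if "c < k" for c
      using eqs[rule_format, of c] that by (simp add: mult.commute)
    have eq1: "(\<Sum>i\<in>F. \<nu> i) = 0" using eqs[rule_format, of k] by simp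
    define R where "R = {i\<in>F. \<nu> i \<noteq> 0}"
    have fR: "finite R" "R \<noteq> {}" using fF nz R_def by auto
    define rr where "rr i = (if \<nu> i > 0 then (1 - mu i) / \<nu> i else - mu i / \<nu> i)" for i
    define t where "t = Min (rr ` R)"
    have "t \<in> rr ` R" unfolding t_def using fR by (intro Min_in) auto
    then obtain i0 where i0: "i0 \<in> R" "rr i0 = t" by auto
    have tle: "t \<le> rr i" if "i \<in> R" for i using Min_le[of "rr ` R"] fR that t_def by auto
    have muF: "0 < mu i \<and> mu i < 1" if "i \<in> F" for i
      using that mub F_def by (auto simp: less_le)
    have rpos: "0 < rr i" if "i \<in> R" for i
      using that muF[of i] R_def by (auto simp: rr_def divide_pos_neg)
    have t0: "0 \<le> t" using rpos i0 by force
    define nu' where "nu' i = (if i \<in> F then \<nu> i else 0)" for i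
    define mu' where "mu' i = mu i + t * nu' i" for i
    have sumA: "(\<Sum>i\<in>A. nu' i * w i) = (\<Sum>i\<in>F. \<nu> i * w i)" for w
    proof -
      have "(\<Sum>i\<in>A. nu' i * w i) = (\<Sum>i\<in>A. if i \<in> F then \<nu> i * w i else 0)"
        by (intro sum.cong) (auto simp: nu'_def)
      also have "\<dots> = (\<Sum>i\<in>A \<inter> F. \<nu> i * w i)" using sum.inter_restrict[OF fA] by metis
      also have "A \<inter> F = F" using FA by auto
      finally show ?thesis .
    qed
    have bnd: "0 \<le> mu' i \<and> mu' i \<le> 1" if "i \<in> A" for i
    proof (cases "i \<in> R")
      case False
      then have "mu' i = mu i" by (auto simp: mu'_def nu'_def R_def)
      then show ?thesis using mub that by auto
    next
      case True
      then have iF: "i \<in> F" and nz: "\<nu> i \<noteq> 0" using R_def by auto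
      have m: "mu' i = mu i + t * \<nu> i" using iF by (simp add: mu'_def nu'_def)
      have tl: "t \<le> rr i" using tle True .
      show ?thesis
      proof (cases "\<nu> i > 0")
        case True
        then have "t * \<nu> i \<le> 1 - mu i" using tl by (simp add: rr_def pos_le_divide_eq)
        moreover have "0 \<le> t * \<nu> i" using t0 True by simp
        ultimately show ?thesis using m muF[OF iF] by auto
      next
        case False
        then have neg: "\<nu> i < 0" using nz by auto
        have "t \<le> - (mu i / \<nu> i)" using tl False by (simp add: rr_def)
        then have "(- (mu i / \<nu> i)) * \<nu> i \<le> t * \<nu> i" using neg by (intro mult_right_mono_neg) auto
        then have "- mu i \<le> t * \<nu> i" using neg by simp
        moreover have "t * \<nu> i \<le> 0" using t0 neg by (simp add: mult_nonneg_nonpos)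
        ultimately show ?thesis using m muF[OF iF] by auto
      qed
    qed
    have "P mu'"
      unfolding P_def
    proof (intro conjI ballI allI impI)
      fix i assume "i \<in> A" then show "0 \<le> mu' i" "mu' i \<le> 1" using bnd by auto
    next
      fix c assume c: "c < k"
      have "(\<Sum>i\<in>A. mu' i * v i c) = (\<Sum>i\<in>A. mu i * v i c) + t * (\<Sum>i\<in>A. nu' i * v i c)"
        by (simp add: mu'_def algebra_simps sum.distrib sum_distrib_left)
      then show "(\<Sum>i\<in>A. mu' i * v i c) = 0" using sumA[of "\<lambda>i. v i c"] eqv[OF c] Pmu c P_def by simp
    next
      have "(\<Sum>i\<in>A. mu' i) = (\<Sum>i\<in>A. mu i) + t * (\<Sum>i\<in>A. nu' i * 1)"
        by (simp add: mu'_def algebra_simps sum.distrib sum_distrib_left)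
      then show "(\<Sum>i\<in>A. mu' i) = real j - real k - 1" using sumA[of "\<lambda>i. 1"] eq1 Pmu P_def by simp
    qed
    have i0int: "mu' i0 \<in> {0,1}"
    proof -
      have iF: "i0 \<in> F" and nz: "\<nu> i0 \<noteq> 0" using i0 R_def by auto
      have m: "mu' i0 = mu i0 + rr i0 * \<nu> i0" using iF i0 by (simp add: mu'_def nu'_def)
      show ?thesis using nz by (cases "\<nu> i0 > 0") (auto simp: m rr_def)
    qed
    have sub: "insert i0 {i\<in>A. mu i \<in> {0,1}} \<subseteq> {i\<in>A. mu' i \<in> {0,1}}"
      using i0int i0 R_def F_def by (auto simp: mu'_def nu'_def)
    have "i0 \<notin> {i\<in>A. mu i \<in> {0,1}}" using i0 R_def F_def by auto
    then have "g mu < g mu'" unfolding g_def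
      using card_mono[OF _ sub] fA by (simp add: card_insert_if)
    then show False using mx \<open>P mu'\<close> by force
  qed
  have "\<exists>a\<in>A. mu a = 0"
  proof (rule ccontr)
    assume "\<not> (\<exists>a\<in>A. mu a = 0)"
    then have pos: "\<forall>i\<in>A. 0 < mu i" using mub by (auto simp: less_le)
    have one: "mu i = 1" if "i \<in> A - F" for i using that F_def pos by auto
    have "(\<Sum>i\<in>A. mu i) = (\<Sum>i\<in>A - F. mu i) + (\<Sum>i\<in>F. mu i)"
      using sum.subset_diff[OF FA fA] by simp
    also have "(\<Sum>i\<in>A - F. mu i) = real (card (A - F))" using one by simp
    also have "card (A - F) = j - card F" using card_Diff_subset[OF fF FA] cA by simp
    finally have eq: "(\<Sum>i\<in>A. mu i) = real (j - card F) + (\<Sum>i\<in>F. mu i)" .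
    have "real j - real k - 1 < (\<Sum>i\<in>A. mu i)"
    proof (cases "F = {}")
      case True
      then show ?thesis using eq by simp
    next
      case False
      have "0 < (\<Sum>i\<in>F. mu i)" using sum_pos[OF fF False] pos FA by auto
      moreover have "card F \<le> j" using card_mono[OF fA FA] cA by simp
      ultimately show ?thesis using eq cardF by (simp add: of_nat_diff)
    qed
    then show False using Pmu P_def by simp
  qed
  then show ?thesis using Pmu P_def by blast
qed



lemma chain_exists:
  assumes "finite A"
  shows "\<exists>B. B (card A) = A \<and> (\<forall>i\<le>card A. card (B i) = i \<and> B i \<subseteq> A)
           \<and> (\<forall>a b. a \<le> b \<and> b \<le> card A \<longrightarrow> B a \<subseteq> B b)"
  using assms
proof (induction A rule: finite_induct)
  case empty
  then show ?case by (rule_tac x="\<lambda>_. {}" in exI) auto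
next
  case (insert x F)
  then obtain B where B: "B (card F) = F" "\<forall>i\<le>card F. card (B i) = i \<and> B i \<subseteq> F"
    "\<forall>a b. a \<le> b \<and> b \<le> card F \<longrightarrow> B a \<subseteq> B b" by blast
  define B' where "B' = B(Suc (card F) := insert x F)"
  have c: "card (insert x F) = Suc (card F)" using insert by simp
  show ?case unfolding c
  proof (intro exI conjI allI impI)
    show "B' (Suc (card F)) = insert x F" by (simp add: B'_def)
  next
    fix i assume "i \<le> Suc (card F)"
    then show "card (B' i) = i" "B' i \<subseteq> insert x F"
      using B c by (auto simp: B'_def le_Suc_eq)
  next
    fix a b assume "a \<le> b \<and> b \<le> Suc (card F)"
    then show "B' a \<subseteq> B' b"
    proof (cases "b = Suc (card F)")
      case True
      then show ?thesis using B \<open>a \<le> b \<and> b \<le> Suc (card F)\<close> by (auto simp: B'_def le_Suc_eq)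
    next
      case False
      then have "b \<le> card F" "a \<le> b" using \<open>a \<le> b \<and> b \<le> Suc (card F)\<close> by auto
      then show ?thesis using B(3) by (auto simp: B'_def)
    qed
  qed
qed

definition feas :: "nat \<Rightarrow> (nat \<Rightarrow> nat \<Rightarrow> real) \<Rightarrow> nat set \<Rightarrow> (nat \<Rightarrow> real) \<Rightarrow> bool" where
  "feas k v A lam \<longleftrightarrow> (\<forall>i\<in>A. 0 \<le> lam i \<and> lam i \<le> 1) \<and> (\<forall>c<k. (\<Sum>i\<in>A. lam i * v i c) = 0)
     \<and> (\<Sum>i\<in>A. lam i) = real (card A) - real k"

lemma feas_chain:
  assumes "finite A" "card A = j" "k \<le> j" "feas k v A lam"
  shows "\<exists>B. B j = A \<and> (\<forall>i\<le>j. card (B i) = i \<and> B i \<subseteq> A)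
           \<and> (\<forall>a b. a \<le> b \<and> b \<le> j \<longrightarrow> B a \<subseteq> B b)
           \<and> (\<forall>i. k \<le> i \<and> i \<le> j \<longrightarrow> (\<exists>l. feas k v (B i) l))"
  using assms
proof (induction j arbitrary: A lam)
  case 0
  then show ?case using chain_exists[OF 0(1)] by auto
next
  case (Suc j)
  show ?case
  proof (cases "k = Suc j")
    case True
    then obtain B where "B (card A) = A \<and> (\<forall>i\<le>card A. card (B i) = i \<and> B i \<subseteq> A)
           \<and> (\<forall>a b. a \<le> b \<and> b \<le> card A \<longrightarrow> B a \<subseteq> B b)"
      using chain_exists[OF Suc.prems(1)] by blast
    moreover have "\<forall>i. k \<le> i \<and> i \<le> Suc j \<longrightarrow> (\<exists>l. feas k v (B i) l)"
    proof (intro allI impI)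
      fix i assume "k \<le> i \<and> i \<le> Suc j"
      then have "i = card A" using True Suc.prems by auto
      then show "\<exists>l. feas k v (B i) l" using calculation Suc.prems by auto
    qed
    ultimately show ?thesis using Suc.prems by (intro exI[of _ B]) auto
  next
    case False
    then have kj: "k < Suc j" using Suc.prems by simp
    have f: "\<forall>i\<in>A. 0 \<le> lam i \<and> lam i \<le> 1" "\<forall>c<k. (\<Sum>i\<in>A. lam i * v i c) = 0"
      "(\<Sum>i\<in>A. lam i) = real (Suc j) - real k" using Suc.prems feas_def by auto
    from step_lemma[OF Suc.prems(1,2) kj f] obtain a mu where a: "a \<in> A"
      and mu: "\<forall>i\<in>A. 0 \<le> mu i \<and> mu i \<le> 1" "\<forall>c<k. (\<Sum>i\<in>A. mu i * v i c) = 0"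
        "(\<Sum>i\<in>A. mu i) = real (Suc j) - real k - 1" "mu a = 0" by blast
    define A' where "A' = A - {a}"
    have fA': "finite A'" using Suc.prems A'_def by auto
    have cA': "card A' = j" using Suc.prems a A'_def by simp
    have sA: "(\<Sum>i\<in>A. w i) = w a + (\<Sum>i\<in>A'. w i)" for w :: "nat \<Rightarrow> real"
      using sum.remove[OF Suc.prems(1) a] A'_def by simp
    have "feas k v A' mu" unfolding feas_def
      using mu sA[of mu] sA[of "\<lambda>i. mu i * v i c" for c] cA' A'_def by auto
    from Suc.IH[OF fA' cA' _ this] kj obtain B where
      B: "B j = A'" "\<forall>i\<le>j. card (B i) = i \<and> B i \<subseteq> A'"
        "\<forall>a b. a \<le> b \<and> b \<le> j \<longrightarrow> B a \<subseteq> B b"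
        "\<forall>i. k \<le> i \<and> i \<le> j \<longrightarrow> (\<exists>l. feas k v (B i) l)" by auto
    define B' where "B' = B(Suc j := A)"
    show ?thesis
    proof (intro exI[of _ B'] conjI allI impI)
      show "B' (Suc j) = A" by (simp add: B'_def)
    next
      fix i assume "i \<le> Suc j"
      then show "card (B' i) = i" "B' i \<subseteq> A"
        using B Suc.prems A'_def by (auto simp: B'_def le_Suc_eq)
    next
      fix x y assume "x \<le> y \<and> y \<le> Suc j"
      then show "B' x \<subseteq> B' y"
      proof (cases "y = Suc j")
        case True
        then show ?thesis using B A'_def \<open>x \<le> y \<and> y \<le> Suc j\<close> by (auto simp: B'_def le_Suc_eq)
      next
        case False
        then have "y \<le> j" "x \<le> y" using \<open>x \<le> y \<and> y \<le> Suc j\<close> by auto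
        then show ?thesis using B(3) by (auto simp: B'_def)
      qed
    next
      fix i assume "k \<le> i \<and> i \<le> Suc j"
      then show "\<exists>l. feas k v (B' i) l" using B Suc.prems by (auto simp: B'_def le_Suc_eq)
    qed
  qed
qed

lemma feas_bound:
  assumes "finite A" "feas k v A lam" "\<forall>i\<in>A. \<bar>v i c\<bar> \<le> D" "c < k"
  shows "\<bar>\<Sum>i\<in>A. v i c\<bar> \<le> real k * D"
proof -
  have f: "\<forall>i\<in>A. 0 \<le> lam i \<and> lam i \<le> 1" "(\<Sum>i\<in>A. lam i * v i c) = 0"
    "(\<Sum>i\<in>A. lam i) = real (card A) - real k" using assms feas_def by auto
  have "(\<Sum>i\<in>A. v i c) = (\<Sum>i\<in>A. v i c) - (\<Sum>i\<in>A. lam i * v i c)" using f by simp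
  also have "\<dots> = (\<Sum>i\<in>A. (1 - lam i) * v i c)" by (simp add: sum_subtractf algebra_simps)
  finally have "\<bar>\<Sum>i\<in>A. v i c\<bar> \<le> (\<Sum>i\<in>A. \<bar>(1 - lam i) * v i c\<bar>)" by (metis sum_abs)
  also have "\<dots> \<le> (\<Sum>i\<in>A. (1 - lam i) * D)"
    using f(1) assms(3) by (intro sum_mono) (auto simp: abs_mult intro: mult_left_mono)
  also have "\<dots> = (\<Sum>i\<in>A. (1 - lam i)) * D" by (simp add: sum_distrib_right)
  also have "\<dots> = real k * D" using f by (simp add: sum_subtractf)
  finally show ?thesis .
qed

lemma small_bound:
  assumes "finite C" "card C \<le> k" "\<forall>i\<in>C. \<bar>v i c\<bar> \<le> D" "0 \<le> D"
  shows "\<bar>\<Sum>i\<in>C. v i c\<bar> \<le> real k * D"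
proof -
  have "\<bar>\<Sum>i\<in>C. v i c\<bar> \<le> (\<Sum>i\<in>C. \<bar>v i c\<bar>)" by (rule sum_abs)
  also have "\<dots> \<le> (\<Sum>i\<in>C. D)" using assms by (intro sum_mono) auto
  also have "\<dots> = real (card C) * D" by simp
  also have "\<dots> \<le> real k * D" using assms by (intro mult_right_mono) auto
  finally show ?thesis .
qed

lemma steinitz_chain:
  fixes v :: "nat \<Rightarrow> nat \<Rightarrow> real"
  assumes "finite A" "\<forall>c<k. (\<Sum>i\<in>A. v i c) = 0" "\<forall>i\<in>A. \<forall>c<k. \<bar>v i c\<bar> \<le> D" "0 \<le> D"
  shows "\<exists>B. B (card A) = A \<and> (\<forall>i\<le>card A. card (B i) = i \<and> B i \<subseteq> A)
           \<and> (\<forall>a b. a \<le> b \<and> b \<le> card A \<longrightarrow> B a \<subseteq> B b)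
           \<and> (\<forall>i\<le>card A. \<forall>c<k. \<bar>\<Sum>x\<in>B i. v x c\<bar> \<le> real k * D)"
proof (cases "k \<le> card A")
  case False
  then obtain B where B: "B (card A) = A \<and> (\<forall>i\<le>card A. card (B i) = i \<and> B i \<subseteq> A)
           \<and> (\<forall>a b. a \<le> b \<and> b \<le> card A \<longrightarrow> B a \<subseteq> B b)"
    using chain_exists[OF assms(1)] by blast
  have "\<forall>i\<le>card A. \<forall>c<k. \<bar>\<Sum>x\<in>B i. v x c\<bar> \<le> real k * D"
  proof (intro allI impI)
    fix i c assume i: "i \<le> card A" and c: "c < k"
    have fB: "finite (B i)" using B i assms(1) finite_subset by blast
    have vb: "\<forall>x\<in>B i. \<bar>v x c\<bar> \<le> D" using B i assms(3) c by blast
    show "\<bar>\<Sum>x\<in>B i. v x c\<bar> \<le> real k * D"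
      using small_bound[of "B i" k v c D] fB vb assms(4) B i c False by auto
  qed
  then show ?thesis using B by blast
next
  case True
  define cc where "cc = (real (card A) - real k) / real (card A)"
  have cc: "0 \<le> cc \<and> cc \<le> 1"
  proof (cases "card A = 0")
    case True then show ?thesis by (simp add: cc_def)
  next
    case False
    then have "0 < real (card A)" by simp
    then show ?thesis using \<open>k \<le> card A\<close> unfolding cc_def by (simp add: field_simps)
  qed
  have "feas k v A (\<lambda>_. cc)" unfolding feas_def
  proof (intro conjI ballI allI impI)
    fix c assume "c < k"
    then show "(\<Sum>i\<in>A. cc * v i c) = 0" using assms(2) by (simp add: sum_distrib_left[symmetric])
  next
    show "(\<Sum>i\<in>A. cc) = real (card A) - real k"
      using True by (cases "card A = 0") (auto simp: cc_def)
  qed (use cc in auto)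
  from feas_chain[OF assms(1) refl True this] obtain B where B0: "B (card A) = A \<and> (\<forall>i\<le>card A. card (B i) = i \<and> B i \<subseteq> A)
           \<and> (\<forall>a b. a \<le> b \<and> b \<le> card A \<longrightarrow> B a \<subseteq> B b)
           \<and> (\<forall>i. k \<le> i \<and> i \<le> card A \<longrightarrow> (\<exists>l. feas k v (B i) l))" ..
  note B = conjunct1[OF B0] conjunct1[OF conjunct2[OF B0]] conjunct1[OF conjunct2[OF conjunct2[OF B0]]]
    conjunct2[OF conjunct2[OF conjunct2[OF B0]]]
  have "\<forall>i\<le>card A. \<forall>c<k. \<bar>\<Sum>x\<in>B i. v x c\<bar> \<le> real k * D"
  proof (intro allI impI)
    fix i c assume i: "i \<le> card A" and c: "c < k"
    have fB: "finite (B i)" using B(2) i assms(1) finite_subset by blast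
    have vb: "\<forall>x\<in>B i. \<bar>v x c\<bar> \<le> D" using B(2) i assms(3) c by blast
    show "\<bar>\<Sum>x\<in>B i. v x c\<bar> \<le> real k * D"
    proof (cases "k \<le> i")
      case True
      then obtain l where l: "feas k v (B i) l" using B(4) i by blast
      show ?thesis using feas_bound[of "B i" k v l c D] fB l vb c by blast
    next
      case False
      then show ?thesis using small_bound[of "B i" k v c D] fB vb assms(4) B(2) i by auto
    qed
  qed
  then show ?thesis using B0 by blast
qed



lemma zero_subset:
  fixes Vi :: "nat \<Rightarrow> nat \<Rightarrow> int" and D :: int
  assumes fI: "finite I" and EI: "E \<subseteq> I" and cE: "card E = t"
    and s0: "\<forall>c<k. (\<Sum>i\<in>I. Vi i c) = 0"
    and vb: "\<forall>i\<in>I. \<forall>c<k. \<bar>Vi i c\<bar> \<le> D" and D0: "0 \<le> D"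
    and big: "(t + 1) * nat (2 * int k * D + 1) ^ k < card I + 1"
  shows "\<exists>T. T \<subseteq> I - E \<and> T \<noteq> {} \<and> (\<forall>c<k. (\<Sum>i\<in>T. Vi i c) = 0)"
proof -
  define v where "v i c = real_of_int (Vi i c)" for i c
  have s0': "\<forall>c<k. (\<Sum>i\<in>I. v i c) = 0" using s0 unfolding v_def
    by (metis of_int_0 of_int_sum)
  have vb': "\<forall>i\<in>I. \<forall>c<k. \<bar>v i c\<bar> \<le> real_of_int D" using vb unfolding v_def
    by (metis of_int_abs of_int_le_iff)
  from steinitz_chain[OF fI s0' vb'] D0 obtain B where B0:
    "B (card I) = I \<and> (\<forall>i\<le>card I. card (B i) = i \<and> B i \<subseteq> I)
           \<and> (\<forall>a b. a \<le> b \<and> b \<le> card I \<longrightarrow> B a \<subseteq> B b)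
           \<and> (\<forall>i\<le>card I. \<forall>c<k. \<bar>\<Sum>x\<in>B i. v x c\<bar> \<le> real k * real_of_int D)" by auto
  note B = conjunct1[OF conjunct2[OF B0]] conjunct1[OF conjunct2[OF conjunct2[OF B0]]]
    conjunct2[OF conjunct2[OF conjunct2[OF B0]]]
  define f where "f i = (card (B i \<inter> E), map (\<lambda>c. \<Sum>x\<in>B i. Vi x c) [0..<k])" for i
  define L where "L = {xs. set xs \<subseteq> {-(int k * D)..int k * D} \<and> length xs = k}"
  have sub: "f ` {0..card I} \<subseteq> {0..t} \<times> L"
  proof
    fix y assume "y \<in> f ` {0..card I}"
    then obtain i where i: "i \<le> card I" and y: "y = f i" by auto
    have fBi: "finite (B i)" using B(1) i fI finite_subset by blast
    have "card (B i \<inter> E) \<le> t" using cE card_mono[of E "B i \<inter> E"] EI fI finite_subset by auto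
    moreover have "\<bar>\<Sum>x\<in>B i. Vi x c\<bar> \<le> int k * D" if "c < k" for c
    proof -
      have "\<bar>\<Sum>x\<in>B i. v x c\<bar> \<le> real k * real_of_int D" using B(3) i that by blast
      moreover have "(\<Sum>x\<in>B i. v x c) = real_of_int (\<Sum>x\<in>B i. Vi x c)" by (simp add: v_def)
      ultimately have "real_of_int \<bar>\<Sum>x\<in>B i. Vi x c\<bar> \<le> real_of_int (int k * D)" by simp
      then show ?thesis by linarith
    qed
    ultimately show "y \<in> {0..t} \<times> L" unfolding y f_def L_def
      by (auto simp: abs_le_iff) (smt (verit))
  qed
  have fL: "finite L" unfolding L_def by (rule finite_lists_length_eq) simp
  have cL: "card L = nat (2 * int k * D + 1) ^ k" unfolding L_def
    by (subst card_lists_length_eq) (auto simp: algebra_simps)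
  have "\<not> inj_on f {0..card I}"
  proof
    assume "inj_on f {0..card I}"
    from card_inj_on_le[OF this sub] fL have "card {0..card I} \<le> card ({0..t} \<times> L)" by simp
    then show False using big cL by (simp add: card_cartesian_product)
  qed
  then obtain a b where ab: "a \<in> {0..card I}" "b \<in> {0..card I}" "a \<noteq> b" "f a = f b"
    unfolding inj_on_def by blast
  have "\<exists>a b. a < b \<and> b \<le> card I \<and> f a = f b"
  proof (cases "a < b")
    case True then show ?thesis using ab by auto
  next
    case False then show ?thesis using ab by (rule_tac x=b in exI, rule_tac x=a in exI) auto
  qed
  then obtain a b where ab: "a < b" "b \<le> card I" "f a = f b" by blast
  define T where "T = B b - B a"
  have Bab: "B a \<subseteq> B b" using B(2) ab by auto
  have fBb: "finite (B b)" using B(1) ab fI finite_subset by blast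
  have cards: "card (B a) = a" "card (B b) = b" using B(1) ab by auto
  have "T \<noteq> {}"
  proof
    assume "T = {}" then have "B b = B a" using Bab T_def by auto
    then show False using cards ab by simp
  qed
  moreover have "T \<inter> E = {}"
  proof -
    have e: "card (B a \<inter> E) = card (B b \<inter> E)" using ab f_def by simp
    have "B a \<inter> E = B b \<inter> E"
      using card_subset_eq[of "B b \<inter> E" "B a \<inter> E"] fBb Bab e by auto
    then show ?thesis using T_def by auto
  qed
  moreover have "T \<subseteq> I" using T_def B(1) ab by auto
  moreover have "\<forall>c<k. (\<Sum>i\<in>T. Vi i c) = 0"
  proof (intro allI impI)
    fix c assume c: "c < k"
    have eq: "(\<Sum>x\<in>B a. Vi x c) = (\<Sum>x\<in>B b. Vi x c)" using ab f_def c by simp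
    have "(\<Sum>x\<in>B b. Vi x c) = (\<Sum>x\<in>B b - B a. Vi x c) + (\<Sum>x\<in>B a. Vi x c)"
      using sum.subset_diff[OF Bab fBb] by simp
    then show "(\<Sum>i\<in>T. Vi i c) = 0" using eq T_def by simp
  qed
  ultimately show ?thesis by blast
qed



lemma split_int:
  fixes x D :: int
  assumes "\<bar>x\<bar> \<le> int t * D" "0 \<le> D"
  shows "\<exists>f. (\<forall>l<t. \<bar>f l\<bar> \<le> D) \<and> (\<Sum>l<t. f l) = x"
  using assms(1)
proof (induction t arbitrary: x)
  case 0 then show ?case by simp
next
  case (Suc t)
  define y where "y = max (-D) (min D x)"
  have M: "0 \<le> int t * D" using assms(2) by simp
  have "\<bar>x\<bar> \<le> D + int t * D" using Suc.prems by (simp add: algebra_simps)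
  then have "\<bar>x - y\<bar> \<le> int t * D" using M assms(2) unfolding y_def
    by (auto simp: abs_le_iff max_def min_def)
  then obtain f where f: "\<forall>l<t. \<bar>f l\<bar> \<le> D" "(\<Sum>l<t. f l) = x - y" using Suc.IH by blast
  define g where "g = f(t := y)"
  have "(\<Sum>l<Suc t. g l) = (\<Sum>l<t. g l) + y" by (simp add: g_def)
  also have "(\<Sum>l<t. g l) = (\<Sum>l<t. f l)" by (intro sum.cong) (auto simp: g_def)
  finally have "(\<Sum>l<Suc t. g l) = x" using f by simp
  moreover have "\<forall>l<Suc t. \<bar>g l\<bar> \<le> D" using f assms(2) by (auto simp: g_def y_def less_Suc_eq)
  ultimately show ?case by blast
qed

lemma split_vec:
  fixes s :: "nat \<Rightarrow> int" and D :: int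
  assumes "\<forall>c<k. \<bar>s c\<bar> \<le> int t * D" "0 \<le> D"
  shows "\<exists>w. (\<forall>l<t. \<forall>c<k. \<bar>w l c\<bar> \<le> D) \<and> (\<forall>c<k. (\<Sum>l<t. w l c) = s c)"
proof -
  have "\<forall>c. \<exists>f. c < k \<longrightarrow> (\<forall>l<t. \<bar>f l\<bar> \<le> D) \<and> (\<Sum>l<t. f l) = s c"
    using split_int assms by blast
  then obtain F where F: "\<forall>c. c < k \<longrightarrow> (\<forall>l<t. \<bar>F c l\<bar> \<le> D) \<and> (\<Sum>l<t. F c l) = s c"
    by metis
  show ?thesis by (rule exI[of _ "\<lambda>l c. F c l"]) (use F in auto)
qed

lemma mat_max_norm_ge:
  assumes "i < k" "j < n"
  shows "\<bar>H i j\<bar> \<le> mat_max_norm k n H"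
proof -
  have "{\<bar>H i j\<bar> | i j. i < k \<and> j < n} \<subseteq> (\<lambda>p. \<bar>H (fst p) (snd p)\<bar>) ` ({..<k} \<times> {..<n})"
    by force
  then have "finite {\<bar>H i j\<bar> | i j. i < k \<and> j < n}" by (rule finite_subset) simp
  then show ?thesis unfolding mat_max_norm_def using assms by (intro Max_ge) auto
qed

lemma mat_max_norm_nonneg: "0 \<le> mat_max_norm k n H"
proof -
  have "{\<bar>H i j\<bar> | i j. i < k \<and> j < n} \<subseteq> (\<lambda>p. \<bar>H (fst p) (snd p)\<bar>) ` ({..<k} \<times> {..<n})"
    by force
  then have "finite {\<bar>H i j\<bar> | i j. i < k \<and> j < n}" by (rule finite_subset) simp
  then show ?thesis unfolding mat_max_norm_def by (intro Max_ge) auto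
qed

lemma vec_inf_norm_ge:
  assumes "i < m"
  shows "\<bar>v i\<bar> \<le> vec_inf_norm m v" "0 \<le> vec_inf_norm m v"
proof -
  have "{\<bar>v i\<bar> | i. i < m} = (\<lambda>i. \<bar>v i\<bar>) ` {..<m}" by auto
  then have f: "finite {\<bar>v i\<bar> | i. i < m}" by simp
  show "\<bar>v i\<bar> \<le> vec_inf_norm m v" unfolding vec_inf_norm_def using assms f by (intro Max_ge) auto
  show "0 \<le> vec_inf_norm m v" unfolding vec_inf_norm_def using f by (intro Max_ge) auto
qed

lemma vec_inf_norm_nonneg: "0 \<le> vec_inf_norm m v"
proof -
  have "{\<bar>v i\<bar> | i. i < m} = (\<lambda>i. \<bar>v i\<bar>) ` {..<m}" by auto
  then have f: "finite {\<bar>v i\<bar> | i. i < m}" by simp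
  show "0 \<le> vec_inf_norm m v" unfolding vec_inf_norm_def using f by (intro Max_ge) auto
qed



theorem mainTheorem2:
  fixes k n :: nat and H :: "nat \<Rightarrow> nat \<Rightarrow> int"
    and bstar :: "nat \<Rightarrow> real" and b :: "nat \<Rightarrow> int"
    and xstar :: "nat \<Rightarrow> real" and \<phi> :: nat
  assumes xstar_box: "\<forall>j<n. 0 \<le> xstar j \<and> xstar j \<le> 1"
    and xstar_eq: "\<forall>i<k. mat_vec_real n H xstar i = bstar i"
    and xstar_frac: "card {j. j < n \<and> xstar j \<notin> {0, 1}} \<le> \<phi>"
    and feasible: "\<exists>z :: nat \<Rightarrow> int. (\<forall>j<n. z j \<in> {0, 1}) \<and> (\<forall>i<k. mat_vec_int n H z i = b i)"
  shows "\<exists>zhat :: nat \<Rightarrow> int. (\<forall>j<n. zhat j \<in> {0, 1}) \<and> (\<forall>i<k. mat_vec_int n H zhat i = b i) \<and>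
    vec_one_norm n (\<lambda>j. xstar j - of_int (zhat j))
      \<le> (of_int \<lceil>vec_inf_norm k (\<lambda>i. bstar i - of_int (b i)) / of_int (mat_max_norm k n H)\<rceil>
          + of_nat \<phi> + 1) * (2 * of_nat k * of_int (mat_max_norm k n H) + 1) ^ k"
proof -
  define \<Delta> where "\<Delta> = mat_max_norm k n H"
  define \<beta> where "\<beta> = vec_inf_norm k (\<lambda>i. bstar i - of_int (b i))"
  have \<Delta>0: "0 \<le> \<Delta>" unfolding \<Delta>_def by (rule mat_max_norm_nonneg)
  have H\<Delta>: "\<bar>H i j\<bar> \<le> \<Delta>" if "i < k" "j < n" for i j
    unfolding \<Delta>_def using mat_max_norm_ge that by blast
  have \<beta>0: "0 \<le> \<beta>" unfolding \<beta>_def by (rule vec_inf_norm_nonneg)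
  have bb: "\<bar>bstar i - of_int (b i)\<bar> \<le> \<beta>" if "i < k" for i
    unfolding \<beta>_def using vec_inf_norm_ge(1)[OF that, of "\<lambda>i. bstar i - of_int (b i)"] by simp
  define P where "P z \<longleftrightarrow> (\<forall>j<n. z j \<in> {0, 1}) \<and> (\<forall>i<k. mat_vec_int n H z i = b i)" for z :: "nat \<Rightarrow> int"
  define Ds where "Ds z = {j. j < n \<and> xstar j \<in> {0,1} \<and> real_of_int (z j) \<noteq> xstar j}" for z :: "nat \<Rightarrow> int"
  obtain z where Pz: "P z" and zmin: "\<forall>y. P y \<longrightarrow> card (Ds z) \<le> card (Ds y)"
    using feasible ex_has_least_nat[of P _ "\<lambda>z. card (Ds z)"] unfolding P_def by metis
  have z01: "\<forall>j<n. z j \<in> {0,1}" and zb: "\<forall>i<k. (\<Sum>j<n. H i j * z j) = b i"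
    using Pz unfolding P_def mat_vec_int_def by auto
  define Fr where "Fr = {j. j < n \<and> xstar j \<notin> {0, 1}}"
  define Dz where "Dz = Ds z"
  have DzS: "Dz \<subseteq> {..<n}" unfolding Dz_def Ds_def by auto
  have fDz: "finite Dz" using DzS finite_subset by blast
  define xb where "xb j = (if xstar j = 1 then 1 else if xstar j = 0 then 0 else z j)" for j
  define \<sigma> where "\<sigma> j = xb j - z j" for j
  have \<sigma>0: "\<sigma> j = 0" if "j < n" "j \<notin> Dz" for j
    using that z01 unfolding \<sigma>_def xb_def Dz_def Ds_def by auto
  have \<sigma>1: "\<bar>\<sigma> j\<bar> \<le> 1" if "j < n" for j
    using that z01 unfolding \<sigma>_def xb_def by auto
  have xbD: "real_of_int (xb j) = xstar j" if "j \<in> Dz" for j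
    using that unfolding xb_def Dz_def Ds_def by auto
  define s where "s c = (\<Sum>j<n. H c j * \<sigma> j)" for c
  have sD: "s c = (\<Sum>j\<in>Dz. \<sigma> j * H c j)" for c
  proof -
    have "s c = (\<Sum>j<n. if j \<in> Dz then \<sigma> j * H c j else 0)"
      unfolding s_def by (intro sum.cong) (auto simp: \<sigma>0)
    also have "\<dots> = (\<Sum>j\<in>{..<n} \<inter> Dz. \<sigma> j * H c j)" by (simp add: sum.inter_restrict)
    also have "{..<n} \<inter> Dz = Dz" using DzS by auto
    finally show ?thesis .
  qed
  define tt where "tt = nat \<lceil>\<beta> / real_of_int \<Delta>\<rceil> + \<phi>"
  have sbound: "\<bar>s c\<bar> \<le> int tt * \<Delta>" if c: "c < k" for c
  proof (cases "\<Delta> = 0")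
    case True
    then have "H c j = 0" if "j < n" for j using H\<Delta>[OF c that] by simp
    then have "s c = 0" unfolding s_def by simp
    then show ?thesis using \<Delta>0 by simp
  next
    case False
    then have \<Delta>p: "0 < \<Delta>" using \<Delta>0 by simp
    have bs: "bstar c = (\<Sum>j<n. real_of_int (H c j) * xstar j)"
      using xstar_eq c unfolding mat_vec_real_def by simp
    have "real_of_int (s c) = (\<Sum>j<n. real_of_int (H c j) * real_of_int (xb j)) - (\<Sum>j<n. real_of_int (H c j) * real_of_int (z j))"
      unfolding s_def \<sigma>_def by (simp add: algebra_simps sum_subtractf)
    also have "(\<Sum>j<n. real_of_int (H c j) * real_of_int (z j)) = real_of_int (b c)"
      using zb c by (metis (no_types, lifting) of_int_mult of_int_sum sum.cong)
    finally have sc: "real_of_int (s c) = (\<Sum>j<n. real_of_int (H c j) * (real_of_int (xb j) - xstar j)) + (bstar c - real_of_int (b c))"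
      using bs by (simp add: algebra_simps sum_subtractf)
    have "\<bar>\<Sum>j<n. real_of_int (H c j) * (real_of_int (xb j) - xstar j)\<bar> \<le> (\<Sum>j<n. \<bar>real_of_int (H c j) * (real_of_int (xb j) - xstar j)\<bar>)"
      by (rule sum_abs)
    also have "\<dots> \<le> (\<Sum>j<n. if j \<in> Fr then real_of_int \<Delta> else 0)"
    proof (intro sum_mono)
      fix j assume j: "j \<in> {..<n}"
      have h: "\<bar>real_of_int (H c j)\<bar> \<le> real_of_int \<Delta>" proof -
        have "\<bar>H c j\<bar> \<le> \<Delta>" using H\<Delta>[OF c, of j] j by simp
        then show ?thesis by (metis of_int_abs of_int_le_iff)
      qed
      show "\<bar>real_of_int (H c j) * (real_of_int (xb j) - xstar j)\<bar> \<le> (if j \<in> Fr then real_of_int \<Delta> else 0)"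
      proof (cases "j \<in> Fr")
        case True
        have "\<bar>real_of_int (xb j) - xstar j\<bar> \<le> 1"
          using z01 xstar_box j unfolding xb_def by auto
        then have "\<bar>real_of_int (H c j)\<bar> * \<bar>real_of_int (xb j) - xstar j\<bar> \<le> real_of_int \<Delta> * 1"
          using h by (intro mult_mono) auto
        then show ?thesis using True by (simp add: abs_mult)
      next
        case False
        then have "real_of_int (xb j) = xstar j" using j unfolding Fr_def xb_def by auto
        then show ?thesis using False by simp
      qed
    qed
    also have "\<dots> = (\<Sum>j\<in>{..<n} \<inter> Fr. real_of_int \<Delta>)" by (simp only: sum.inter_restrict[OF finite_lessThan])
    also have "{..<n} \<inter> Fr = Fr" unfolding Fr_def by auto
    also have "(\<Sum>j\<in>Fr. real_of_int \<Delta>) = real (card Fr) * real_of_int \<Delta>" by simp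
    also have "\<dots> \<le> real \<phi> * real_of_int \<Delta>"
      using xstar_frac \<Delta>0 unfolding Fr_def by (intro mult_right_mono) auto
    finally have t1: "\<bar>\<Sum>j<n. real_of_int (H c j) * (real_of_int (xb j) - xstar j)\<bar> \<le> real \<phi> * real_of_int \<Delta>" .
    have "\<beta> / real_of_int \<Delta> \<le> real_of_int \<lceil>\<beta> / real_of_int \<Delta>\<rceil>" by (rule le_of_int_ceiling)
    moreover have "0 < real_of_int \<Delta>" using \<Delta>p by simp
    ultimately have t2: "\<beta> \<le> real_of_int \<lceil>\<beta> / real_of_int \<Delta>\<rceil> * real_of_int \<Delta>"
      using pos_divide_le_eq by blast
    have "0 \<le> \<beta> / real_of_int \<Delta>" using \<beta>0 \<Delta>0 by simp
    then have cnn: "0 \<le> \<lceil>\<beta> / real_of_int \<Delta>\<rceil>" by simp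
    have "real_of_int \<bar>s c\<bar> \<le> real \<phi> * real_of_int \<Delta> + real_of_int \<lceil>\<beta> / real_of_int \<Delta>\<rceil> * real_of_int \<Delta>"
      using sc t1 t2 bb[OF c] by linarith
    also have "\<dots> = real_of_int (int tt * \<Delta>)" unfolding tt_def using cnn by (simp add: algebra_simps)
    finally show ?thesis by linarith
  qed
  obtain w where w: "\<forall>l<tt. \<forall>c<k. \<bar>w l c\<bar> \<le> \<Delta>" "\<forall>c<k. (\<Sum>l<tt. w l c) = - s c"
    using split_vec[of k "\<lambda>c. - s c" tt \<Delta>] sbound \<Delta>0 by auto
  define N where "N = nat (2 * int k * \<Delta> + 1) ^ k"
  have cardD: "card Dz + tt + 1 \<le> (tt + 1) * N"
  proof (rule ccontr)
    assume big0: "\<not> card Dz + tt + 1 \<le> (tt + 1) * N"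
    define E where "E = {n..<n+tt}"
    define I where "I = Dz \<union> E"
    define Vi where "Vi x c = (if x < n then \<sigma> x * H c x else w (x - n) c)" for x c
    have fI: "finite I" unfolding I_def E_def using fDz by simp
    have EI: "E \<subseteq> I" unfolding I_def by auto
    have cE: "card E = tt" unfolding E_def by simp
    have disj: "Dz \<inter> E = {}" using DzS unfolding E_def by auto
    have cI: "card I = card Dz + tt" unfolding I_def using card_Un_disjoint[OF fDz _ disj] cE E_def by simp
    have s0: "\<forall>c<k. (\<Sum>i\<in>I. Vi i c) = 0"
    proof (intro allI impI)
      fix c assume c: "c < k"
      have "(\<Sum>i\<in>I. Vi i c) = (\<Sum>i\<in>Dz. Vi i c) + (\<Sum>i\<in>E. Vi i c)"
        unfolding I_def using sum.union_disjoint[OF fDz _ disj] E_def by simp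
      also have "(\<Sum>i\<in>Dz. Vi i c) = (\<Sum>j\<in>Dz. \<sigma> j * H c j)"
        using DzS by (intro sum.cong) (auto simp: Vi_def)
      also have "(\<Sum>i\<in>E. Vi i c) = (\<Sum>i\<in>{0+n..<tt+n}. w (i - n) c)"
        unfolding E_def by (intro sum.cong) (auto simp: Vi_def add.commute)
      also have "\<dots> = (\<Sum>l\<in>{0..<tt}. w l c)" by (simp only: sum.shift_bounds_nat_ivl) simp
      also have "\<dots> = - s c" using w(2) c by (simp add: atLeast0LessThan)
      finally show "(\<Sum>i\<in>I. Vi i c) = 0" using sD[of c] by simp
    qed
    have vb: "\<forall>i\<in>I. \<forall>c<k. \<bar>Vi i c\<bar> \<le> \<Delta>"
    proof (intro ballI allI impI)
      fix i c assume i: "i \<in> I" and c: "c < k"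
      show "\<bar>Vi i c\<bar> \<le> \<Delta>"
      proof (cases "i < n")
        case True
        have "\<bar>\<sigma> i * H c i\<bar> \<le> 1 * \<Delta>" unfolding abs_mult
          using \<sigma>1[OF True] H\<Delta>[OF c True] by (intro mult_mono) auto
        then show ?thesis using True by (simp add: Vi_def)
      next
        case False
        then have "i \<in> E" using i DzS unfolding I_def by auto
        then have "i - n < tt" unfolding E_def by auto
        then show ?thesis using False w(1) c by (simp add: Vi_def)
      qed
    qed
    have bigI: "(tt + 1) * nat (2 * int k * \<Delta> + 1) ^ k < card I + 1"
      using big0 cI unfolding N_def by simp
    from zero_subset[OF fI EI cE s0 vb \<Delta>0 bigI] obtain T where
      T: "T \<subseteq> I - E" "T \<noteq> {}" "\<forall>c<k. (\<Sum>i\<in>T. Vi i c) = 0" by blast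
    have TD: "T \<subseteq> Dz" using T(1) unfolding I_def by auto
    have Tn: "T \<subseteq> {..<n}" using TD DzS by auto
    define z' where "z' j = (if j \<in> T then xb j else z j)" for j
    have "P z'" unfolding P_def mat_vec_int_def
    proof (intro conjI allI impI)
      fix j assume "j < n" then show "z' j \<in> {0,1}" using z01 unfolding z'_def xb_def by auto
    next
      fix c assume c: "c < k"
      have "(\<Sum>j<n. H c j * z' j) = (\<Sum>j<n. H c j * z j + (if j \<in> T then \<sigma> j * H c j else 0))"
        by (intro sum.cong) (auto simp: z'_def \<sigma>_def algebra_simps)
      also have "\<dots> = (\<Sum>j<n. H c j * z j) + (\<Sum>j\<in>{..<n} \<inter> T. \<sigma> j * H c j)"
        by (simp only: sum.distrib sum.inter_restrict[OF finite_lessThan])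
      also have "{..<n} \<inter> T = T" using Tn by auto
      also have "(\<Sum>j\<in>T. \<sigma> j * H c j) = (\<Sum>i\<in>T. Vi i c)"
        using Tn by (intro sum.cong) (auto simp: Vi_def)
      finally show "(\<Sum>j<n. H c j * z' j) = b c" using T(3) c zb by simp
    qed
    have sub: "Ds z' \<subseteq> Dz - T"
    proof
      fix j assume j: "j \<in> Ds z'"
      show "j \<in> Dz - T"
      proof (cases "j \<in> T")
        case True
        then have "real_of_int (z' j) = xstar j" using xbD TD unfolding z'_def by auto
        then show ?thesis using j unfolding Ds_def by auto
      next
        case False
        then show ?thesis using j unfolding Ds_def Dz_def z'_def by auto
      qed
    qed
    have fT: "finite T" using TD fDz finite_subset by blast
    have "0 < card T" using fT T(2) by (simp add: card_gt_0_iff)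
    moreover have "card (Dz - T) = card Dz - card T" by (rule card_Diff_subset[OF fT TD])
    moreover have "card T \<le> card Dz" using card_mono[OF fDz TD] .
    ultimately have "card (Dz - T) < card Dz" by linarith
    then have "card (Ds z') < card (Ds z)"
      using card_mono[OF _ sub] fDz Dz_def by fastforce
    then show False using zmin \<open>P z'\<close> by fastforce
  qed
  have l1: "vec_one_norm n (\<lambda>j. xstar j - of_int (z j)) \<le> real (card Dz) + real \<phi>"
  proof -
    have "vec_one_norm n (\<lambda>j. xstar j - of_int (z j)) \<le> (\<Sum>j<n. (if j \<in> Dz then 1 else 0) + (if j \<in> Fr then 1 else 0))"
      unfolding vec_one_norm_def
    proof (intro sum_mono)
      fix j assume j: "j \<in> {..<n}"
      have a1: "\<bar>xstar j - real_of_int (z j)\<bar> \<le> 1" using z01 xstar_box j by auto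
      show "\<bar>xstar j - real_of_int (z j)\<bar> \<le> (if j \<in> Dz then 1 else 0) + (if j \<in> Fr then 1 else 0)"
      proof (cases "xstar j \<in> {0,1}")
        case True
        then show ?thesis using a1 j unfolding Dz_def Ds_def Fr_def by auto
      next
        case False
        then show ?thesis using a1 j unfolding Fr_def by auto
      qed
    qed
    also have "\<dots> = (\<Sum>j\<in>{..<n} \<inter> Dz. 1) + (\<Sum>j\<in>{..<n} \<inter> Fr. 1)"
      by (simp only: sum.distrib sum.inter_restrict[OF finite_lessThan])
    also have "{..<n} \<inter> Dz = Dz" using DzS by auto
    also have "{..<n} \<inter> Fr = Fr" unfolding Fr_def by auto
    finally show ?thesis using xstar_frac unfolding Fr_def by simp
  qed
  have "0 \<le> \<beta> / real_of_int \<Delta>" using \<beta>0 \<Delta>0 by simp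
  then have cnn: "0 \<le> \<lceil>\<beta> / real_of_int \<Delta>\<rceil>" by simp
  have RN: "real N = (2 * real k * real_of_int \<Delta> + 1) ^ k"
    unfolding N_def using \<Delta>0 by (simp add: of_nat_power)
  have "real (card Dz) + real \<phi> \<le> real ((tt + 1) * N)"
    using cardD unfolding tt_def by linarith
  also have "real ((tt + 1) * N) = (of_int \<lceil>\<beta> / real_of_int \<Delta>\<rceil> + of_nat \<phi> + 1) * (2 * of_nat k * of_int \<Delta> + 1) ^ k"
    using cnn RN unfolding tt_def by (simp add: algebra_simps)
  finally have "vec_one_norm n (\<lambda>j. xstar j - of_int (z j)) \<le> (of_int \<lceil>\<beta> / real_of_int \<Delta>\<rceil> + of_nat \<phi> + 1) * (2 * of_nat k * of_int \<Delta> + 1) ^ k"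
    using l1 by linarith
  then show ?thesis using Pz unfolding P_def \<beta>_def \<Delta>_def by blast
qed


end
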